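(* Let $K$ be a simplicial complex in $\mathbb{R}^N$ and let $U\subset\mathbb{R}^N$ be a convex subset. Then the subcomplex $K\cap U$ is nice.
   Context: A simplicial complex is a locally finite set of linear simplices in $\mathbb{R}^N$ closed under faces with pairwise intersections common faces. $K\cap U$ is the maximal subcomplex of $K$ whose simplices are all contained in $U$. For a subcomplex $K'$ and $\Delta\in K$, $\Delta\cap K'$ denotes the set of simplices of $K'$ that are faces of $\Delta$. Two simplices are adjacent if they share a face; $\operatorname{star}(K')$ is the set of simplices adjacent to some simplex of $K'$ with their faces. $K'$ is nice if for every $\Delta\in\operatorname{star}(K')$, $\Delta\cap K'$ is a single face of $\Delta$ (together with its faces). *)

theory Defs
  imports "HOL-Analysis.Analysis"
begin

definition is_simplex :: "(real^'n) set \<Rightarrow> bool" where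
  "is_simplex S \<longleftrightarrow> (\<exists>k::int. k \<ge> 0 \<and> k simplex S)"

definition simplex_face :: "(real^'n) set \<Rightarrow> (real^'n) set \<Rightarrow> bool" where
  "simplex_face F S \<longleftrightarrow> F face_of S \<and> F \<noteq> {}"

definition locally_finite_family :: "(real^'n) set set \<Rightarrow> bool" where
  "locally_finite_family K \<longleftrightarrow>
     (\<forall>x. \<exists>e>0. finite {D\<in>K. D \<inter> ball x e \<noteq> {}})"

definition lin_simplicial_complex :: "(real^'n) set set \<Rightarrow> bool" where
  "lin_simplicial_complex K \<longleftrightarrow>
     (\<forall>D\<in>K. is_simplex D) \<and>
     locally_finite_family K \<and>
     (\<forall>D\<in>K. \<forall>F. simplex_face F D \<longrightarrow> F \<in> K) \<and>
     (\<forall>D\<in>K. \<forall>D'\<in>K. (D \<inter> D') face_of D \<and> (D \<inter> D') face_of D')"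

definition subcomplex :: "(real^'n) set set \<Rightarrow> (real^'n) set set \<Rightarrow> bool" where
  "subcomplex K' K \<longleftrightarrow> K' \<subseteq> K \<and> lin_simplicial_complex K'"

text \<open>K \<inter> U: the maximal subcomplex whose simplices are all contained in U.\<close>
definition complex_restrict :: "(real^'n) set set \<Rightarrow> (real^'n) set \<Rightarrow> (real^'n) set set" where
  "complex_restrict K U = {D\<in>K. D \<subseteq> U}"

text \<open>For a simplex D, D \<inter> K' is the set of simplices of K' that are faces of D.\<close>
definition simplex_meet :: "(real^'n) set \<Rightarrow> (real^'n) set set \<Rightarrow> (real^'n) set set" where
  "simplex_meet D K' = {G\<in>K'. simplex_face G D}"

definition adjacent :: "(real^'n) set \<Rightarrow> (real^'n) set \<Rightarrow> bool" where
  "adjacent D D' \<longleftrightarrow> (\<exists>F. simplex_face F D \<and> simplex_face F D')"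

definition complex_star :: "(real^'n) set set \<Rightarrow> (real^'n) set set \<Rightarrow> (real^'n) set set" where
  "complex_star K K' =
     {F. \<exists>D\<in>K. (\<exists>S\<in>K'. adjacent D S) \<and> (F = D \<or> simplex_face F D)}"

text \<open>K' is nice in K: for every D in star(K'), D \<inter> K' consists of a single face F of D
  together with its faces (F may be empty, i.e. D \<inter> K' may be empty).\<close>
definition nice :: "(real^'n) set set \<Rightarrow> (real^'n) set set \<Rightarrow> bool" where
  "nice K K' \<longleftrightarrow>
     (\<forall>D\<in>complex_star K K'. \<exists>F. F face_of D \<and>
        simplex_meet D K' = {G. simplex_face G F})"

end

theory Submission
  imports Defs
begin
lemma restrict_sub:
  assumes K: "lin_simplicial_complex K"
  shows "subcomplex (complex_restrict K U) K"
proof -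
  have sub: "complex_restrict K U \<subseteq> K" by (auto simp: complex_restrict_def)
  have lf: "locally_finite_family (complex_restrict K U)"
    unfolding locally_finite_family_def
  proof
    fix x
    have "locally_finite_family K" using K unfolding lin_simplicial_complex_def by blast
    then obtain e where "e>0" "finite {D\<in>K. D \<inter> ball x e \<noteq> {}}"
      unfolding locally_finite_family_def by blast
    moreover have "{D\<in>complex_restrict K U. D \<inter> ball x e \<noteq> {}} \<subseteq> {D\<in>K. D \<inter> ball x e \<noteq> {}}"
      using sub by blast
    ultimately show "\<exists>e>0. finite {D\<in>complex_restrict K U. D \<inter> ball x e \<noteq> {}}"
      using finite_subset by blast
  qed
  have fc: "\<forall>D\<in>complex_restrict K U. \<forall>F. simplex_face F D \<longrightarrow> F \<in> complex_restrict K U"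
  proof (intro ballI allI impI)
    fix D F assume D: "D \<in> complex_restrict K U" and F: "simplex_face F D"
    have "F \<in> K" using K D F sub unfolding lin_simplicial_complex_def by blast
    moreover have "F \<subseteq> D" using F face_of_imp_subset simplex_face_def by blast
    ultimately show "F \<in> complex_restrict K U" using D by (auto simp: complex_restrict_def)
  qed
  have "\<forall>D\<in>complex_restrict K U. is_simplex D"
    "\<forall>D\<in>complex_restrict K U. \<forall>D'\<in>complex_restrict K U. (D \<inter> D') face_of D \<and> (D \<inter> D') face_of D'"
    using K sub unfolding lin_simplicial_complex_def by blast+
  then show ?thesis using lf fc sub unfolding subcomplex_def lin_simplicial_complex_def
    by blast
qed
theorem lemma3p11:
  fixes K :: "(real^'n) set set" and U :: "(real^'n) set"
  assumes "lin_simplicial_complex K" and "convex U"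
  shows "subcomplex (complex_restrict K U) K \<and> nice K (complex_restrict K U)"
proof
  show "subcomplex (complex_restrict K U) K" using restrict_sub[OF assms(1)] .
  have Ksimp: "\<forall>D\<in>K. is_simplex D" and Kface: "\<forall>D\<in>K. \<forall>F. simplex_face F D \<longrightarrow> F \<in> K"
    using assms(1) unfolding lin_simplicial_complex_def by blast+
  show "nice K (complex_restrict K U)"
    unfolding nice_def
  proof
    fix D assume "D \<in> complex_star K (complex_restrict K U)"
    then obtain D0 where D0: "D0 \<in> K" and DD0: "D = D0 \<or> simplex_face D D0"
      unfolding complex_star_def mem_Collect_eq by blast
    have DK: "D \<in> K" using DD0 D0 Kface by blast
    then obtain k where "k simplex D" using Ksimp unfolding is_simplex_def by blast
    then obtain C where C: "\<not> affine_dependent C" "D = convex hull C"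
      unfolding simplex_def by blast
    define F where "F = convex hull {v\<in>C. v \<in> U}"
    have FD: "F face_of D" unfolding F_def C(2)
      by (subst face_of_convex_hull_affine_independent[OF C(1)]) (intro exI[of _ "{v\<in>C. v \<in> U}"], simp)
    have FU: "F \<subseteq> U" unfolding F_def by (intro hull_minimal assms(2)) auto
    have "simplex_meet D (complex_restrict K U) = {G. simplex_face G F}"
    proof (intro set_eqI iffI)
      fix G assume "G \<in> simplex_meet D (complex_restrict K U)"
      then have G: "G \<in> K" "G \<subseteq> U" "G face_of D" "G \<noteq> {}"
        unfolding simplex_meet_def complex_restrict_def simplex_face_def by auto
      from G(3) obtain c where c: "c \<subseteq> C" "G = convex hull c"
        unfolding C(2) face_of_convex_hull_affine_independent[OF C(1)] by blast
      have "c \<subseteq> G" unfolding c(2) by (rule hull_subset)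
      then have "c \<subseteq> {v\<in>C. v \<in> U}" using c(1) G(2) by blast
      then have "G \<subseteq> F" unfolding F_def c(2) by (rule hull_mono)
      then have "G face_of F" using face_of_subset[OF G(3) _ face_of_imp_subset[OF FD]] by blast
      then show "G \<in> {G. simplex_face G F}" using G(4) by (simp add: simplex_face_def)
    next
      fix G assume "G \<in> {G. simplex_face G F}"
      then have G: "G face_of F" "G \<noteq> {}" by (auto simp: simplex_face_def)
      have GD: "G face_of D" using face_of_trans[OF G(1) FD] .
      have "G \<subseteq> U" using face_of_imp_subset[OF G(1)] FU by blast
      moreover have "G \<in> K" using Kface DK GD G(2)
        unfolding simplex_face_def by blast
      ultimately show "G \<in> simplex_meet D (complex_restrict K U)"
        using GD G(2) by (simp add: simplex_meet_def complex_restrict_def simplex_face_def)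
    qed
    then show "\<exists>F. F face_of D \<and> simplex_meet D (complex_restrict K U) = {G. simplex_face G F}"
      using FD by blast
  qed
qed

end
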